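(* Let $\kappa>0$ and define, for $\alpha>0$, $$g_\kappa(\alpha)=1-\exp\!\Big(-\big(\kappa\,\Gamma(\tfrac{1}{\alpha}+1)\big)^{\alpha}\Big).$$ (i) If $\kappa\le 1$, then $$\inf_{\alpha\in(0,\infty)} g_\kappa(\alpha)=\lim_{\alpha\to+\infty} g_\kappa(\alpha)=\begin{cases}0,&\kappa<1,\\ 1-e^{-e^{-\gamma}},&\kappa=1,\end{cases}$$ where $\gamma=\sum_{n=1}^\infty\big[\frac1n-\ln(1+\frac1n)\big]$ is Euler's constant. (ii) If $\kappa>1$, then the function $\varphi_\kappa(x):=(x-1)\psi(x)-\ln(\kappa\Gamma(x))$ has a unique zero $x_0(\kappa)$ on $(1,\infty)$, and $$\min_{\alpha\in(0,\infty)} g_\kappa(\alpha)=g_\kappa(\alpha_0(\kappa)),\qquad \alpha_0(\kappa)=\frac{1}{x_0(\kappa)-1}.$$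
   Context: $\Gamma$ denotes the Gamma function and $\psi=\Gamma'/\Gamma$ the digamma function. Interpretation: if $X$ is a Weibull random variable with parameters $\alpha>0,\theta>0$, i.e. with density $f(x)=\frac{\alpha}{\theta}x^{\alpha-1}e^{-x^\alpha/\theta}$ for $x>0$, then $EX=\theta^{1/\alpha}\Gamma(\frac1\alpha+1)$ and $P(X\le\kappa EX)=g_\kappa(\alpha)$ (independent of $\theta$). *)

theory Defs
  imports "HOL-Analysis.Analysis"
begin

definition weib_g :: "real \<Rightarrow> real \<Rightarrow> real" where
  "weib_g \<kappa> \<alpha> = 1 - exp (- ((\<kappa> * Gamma (1 / \<alpha> + 1)) powr \<alpha>))"

definition weib_phi :: "real \<Rightarrow> real \<Rightarrow> real" where
  "weib_phi \<kappa> x = (x - 1) * Digamma x - ln (\<kappa> * Gamma x)"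

end

theory Submission
  imports Defs
begin

definition PP :: "real \<Rightarrow> real" where
  "PP x = (x - 1) * Digamma x - ln_Gamma x"

definition FF :: "real \<Rightarrow> real \<Rightarrow> real" where
  "FF k a = a * (ln k + ln_Gamma (1 / a + 1))"

lemma pos_not_nonpos_Int: "(x::real) > 0 \<Longrightarrow> x \<notin> \<int>\<^sub>\<le>\<^sub>0"
  by (auto elim!: nonpos_Ints_cases)

lemma PP_deriv: "x > 0 \<Longrightarrow> (PP has_real_derivative (x - 1) * Polygamma 1 x) (at x)"
  unfolding PP_def[abs_def]
  using pos_not_nonpos_Int[of x]
  by (auto intro!: derivative_eq_intros simp: algebra_simps)

lemma PP_1: "PP 1 = 0"
  by (simp add: PP_def ln_Gamma_real_pos)

lemma PP_strict_mono:
  assumes "1 \<le> a" "a < b"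
  shows "PP a < PP b"
proof -
  have "\<exists>z. a < z \<and> z < b \<and> PP b - PP a = (b - a) * ((z - 1) * Polygamma 1 z)"
    using assms by (intro MVT2 allI impI PP_deriv) auto
  then obtain z where z: "a < z" "z < b" "PP b - PP a = (b - a) * ((z - 1) * Polygamma 1 z)"
    by blast
  have "Polygamma 1 z > 0"
    using z assms by (intro Polygamma_real_odd_pos pos_not_nonpos_Int) auto
  then have "(b - a) * ((z - 1) * Polygamma 1 z) > 0"
    using z assms by simp
  then show ?thesis using z by simp
qed

lemma PP_cont: "continuous_on {1..b} PP"
  by (intro continuous_at_imp_continuous_on ballI DERIV_isCont[OF PP_deriv]) auto

lemma PP_ge_Digamma:
  assumes "x > 2"
  shows "PP x \<ge> Digamma x"
proof -
  have "\<exists>z. 2 < z \<and> z < x \<and> ln_Gamma x - ln_Gamma 2 = (x - 2) * Digamma z"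
    using assms by (intro MVT2 allI impI has_field_derivative_ln_Gamma_real) auto
  then obtain z where z: "2 < z" "z < x" "ln_Gamma x - ln_Gamma 2 = (x - 2) * Digamma z"
    by blast
  have g2: "ln_Gamma (2::real) = 0"
  proof -
    have "Gamma (2::real) = 1"
      using Gamma_fact[of 1] by (simp add: numeral_2_eq_2)
    then show ?thesis by (simp add: ln_Gamma_real_pos)
  qed
  have "Digamma z \<le> Digamma x" using z by (intro Digamma_real_mono) auto
  then have "(x - 2) * Digamma z \<le> (x - 2) * Digamma x"
    using assms by (intro mult_left_mono) auto
  then show ?thesis using z g2 unfolding PP_def by (simp add: algebra_simps)
qed

lemma PP_unbounded: "\<exists>x>1. PP x > M"
proof -
  define n where "n = nat \<lceil>exp (M + euler_mascheroni)\<rceil> + 2"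
  have n2: "real n \<ge> 2" unfolding n_def using exp_gt_zero[of "M + euler_mascheroni"] by (simp; linarith)
  have "real n \<ge> exp (M + euler_mascheroni)" unfolding n_def
    using le_of_int_ceiling[of "exp (M + euler_mascheroni)"] by (simp; linarith)
  then have lt: "exp (M + euler_mascheroni) < real n + 1" by linarith
  have "ln (exp (M + euler_mascheroni)) < ln (real n + 1)"
    using lt by (subst ln_less_cancel_iff) auto
  then have "M + euler_mascheroni < ln (real n + 1)" by simp
  also have "ln (real n + 1) \<le> harm n" by (rule ln_le_harm)
  finally have "M < harm n - euler_mascheroni" by simp
  also have "harm n - euler_mascheroni = Digamma (real (Suc n))"
    using Digamma_of_nat[of n, where 'a=real] by simp
  also have "\<dots> \<le> PP (real (Suc n))" using n2 by (intro PP_ge_Digamma) auto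
  finally show ?thesis using n2 by (intro exI[of _ "real (Suc n)"]) auto
qed

lemma phi_eq: "k > 0 \<Longrightarrow> x > 0 \<Longrightarrow> weib_phi k x = PP x - ln k"
proof -
  assume k: "k > 0" and x: "x > 0"
  have "Gamma x > 0" using x by simp
  then have "ln (k * Gamma x) = ln k + ln_Gamma x"
  proof -
    have "Gamma x \<noteq> 0" "k \<noteq> 0" using \<open>Gamma x > 0\<close> k by auto
    then show ?thesis using ln_mult[of k "Gamma x"] ln_Gamma_real_pos[OF x] by simp
  qed
  then show ?thesis unfolding weib_phi_def PP_def by linarith
qed

lemma g_eq: "k > 0 \<Longrightarrow> a > 0 \<Longrightarrow> weib_g k a = 1 - exp (- exp (FF k a))"
proof -
  assume k: "k > 0" and a: "a > 0"
  have "1 / a > 0" using a by simp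
  then have "1 / a + 1 > 0" by linarith
  have lg: "ln (Gamma (1 / a + 1)) = ln_Gamma (1 / a + 1)"
    using \<open>1 / a + 1 > 0\<close> by (simp add: ln_Gamma_real_pos)
  have pos: "Gamma (1 / a + 1) > 0" using \<open>1 / a + 1 > 0\<close> by (intro Gamma_real_pos)
  have "k * Gamma (1 / a + 1) > 0" by (rule mult_pos_pos[OF k pos])
  then show ?thesis
    unfolding weib_g_def FF_def using pos k a lg
    by (simp add: powr_def ln_mult)
qed

lemma FF_deriv:
  assumes "a > 0"
  shows "(FF k has_real_derivative (- (PP (1 / a + 1) - ln k))) (at a)"
proof -
  have "1 / a > 0" using assms by simp
  then have p: "1 / a + 1 > 0" by linarith
  show ?thesis
    unfolding FF_def[abs_def] PP_def
    using assms p
    by (auto intro!: derivative_eq_intros simp: field_simps power2_eq_square)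
qed

lemma FF_mvt:
  assumes "0 < a" "a < b"
  shows "\<exists>z. a < z \<and> z < b \<and> FF k b - FF k a = (b - a) * (- (PP (1 / z + 1) - ln k))"
  using assms by (intro MVT2 allI impI FF_deriv) auto

lemma g_mono_FF:
  "FF k a \<le> FF k b \<Longrightarrow> 1 - exp (- exp (FF k a)) \<le> 1 - exp (- exp (FF k b))"
  by simp

lemma lim_lnG: "((\<lambda>a::real. a * ln_Gamma (1 / a + 1)) \<longlongrightarrow> - euler_mascheroni) at_top"
proof -
  have d: "((\<lambda>h. (ln_Gamma (1 + h) - ln_Gamma 1) / h) \<longlongrightarrow> Digamma (1::real)) (at 0)"
    using has_field_derivative_ln_Gamma_real[of 1] unfolding DERIV_def by simp
  have l1: "ln_Gamma (1::real) = 0" by (simp add: ln_Gamma_real_pos)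
  have d2: "((\<lambda>h. ln_Gamma (1 + h) / h) \<longlongrightarrow> - euler_mascheroni) (at (0::real))"
    using d l1 by simp
  have d3: "((\<lambda>h. ln_Gamma (1 + h) / h) \<longlongrightarrow> - euler_mascheroni) (at_right (0::real))"
    by (rule tendsto_within_subset[OF d2]) auto
  have f: "filterlim (\<lambda>a::real. 1 / a) (at_right 0) at_top"
    using filterlim_inverse_at_right_top by (simp add: inverse_eq_divide)
  have "((\<lambda>a::real. ln_Gamma (1 + 1 / a) / (1 / a)) \<longlongrightarrow> - euler_mascheroni) at_top"
    using filterlim_compose[OF d3 f] by simp
  then show ?thesis
    by (rule Lim_transform_eventually) (auto intro!: eventually_at_top_linorderI[of 1] simp: field_simps)
qed

lemma FF_lim: "((\<lambda>a. FF 1 a) \<longlongrightarrow> - euler_mascheroni) at_top"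
  using lim_lnG unfolding FF_def by simp

lemma FF_lim_bot:
  assumes "k > 0" "k < 1"
  shows "filterlim (FF k) at_bot at_top"
proof -
  have lk: "ln k < 0" using assms by simp
  have "LIM a at_top. ln k * a :> at_bot"
    by (rule filterlim_tendsto_neg_mult_at_bot[OF tendsto_const lk filterlim_ident])
  then have "LIM a at_top. a * ln_Gamma (1 / a + 1) + ln k * a :> at_bot"
    using filterlim_tendsto_add_at_bot_iff[OF lim_lnG] by blast
  then show ?thesis unfolding FF_def by (simp add: algebra_simps)
qed

theorem proposition2p1:
  fixes \<kappa> :: real
  assumes "\<kappa> > 0"
  shows "(\<kappa> \<le> 1 \<longrightarrow>
           (let L = (if \<kappa> < 1 then 0 else 1 - exp (- exp (- euler_mascheroni))) in
             (INF \<alpha>\<in>{0<..}. weib_g \<kappa> \<alpha>) = L \<and> (weib_g \<kappa> \<longlongrightarrow> L) at_top))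
       \<and> (\<kappa> > 1 \<longrightarrow>
           (\<exists>!x. x > 1 \<and> weib_phi \<kappa> x = 0) \<and>
           (\<forall>x0. x0 > 1 \<and> weib_phi \<kappa> x0 = 0 \<longrightarrow>
              (let \<alpha>0 = 1 / (x0 - 1) in
                 (\<forall>\<alpha>>0. weib_g \<kappa> \<alpha>0 \<le> weib_g \<kappa> \<alpha>) \<and>
                 weib_g \<kappa> \<alpha>0 = (INF \<alpha>\<in>{0<..}. weib_g \<kappa> \<alpha>))))"
proof -
  have k: "\<kappa> > 0" by fact
  have part1: "\<kappa> \<le> 1 \<longrightarrow>
           (let L = (if \<kappa> < 1 then 0 else 1 - exp (- exp (- euler_mascheroni))) in
             (INF \<alpha>\<in>{0<..}. weib_g \<kappa> \<alpha>) = L \<and> (weib_g \<kappa> \<longlongrightarrow> L) at_top)"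
  proof
    assume k1: "\<kappa> \<le> 1"
    define L :: real where "L = (if \<kappa> < 1 then 0 else 1 - exp (- exp (- euler_mascheroni)))"
    have anti: "FF \<kappa> b \<le> FF \<kappa> a" if ab: "0 < a" "a \<le> b" for a b :: real
    proof (cases "a = b")
      case True thus ?thesis by simp
    next
      case False
      with ab have "a < b" by simp
      from FF_mvt[OF ab(1) this, of \<kappa>] obtain z where
        z: "a < z" "z < b" "FF \<kappa> b - FF \<kappa> a = (b - a) * (- (PP (1 / z + 1) - ln \<kappa>))"
        by blast
      have "1 / z > 0" using z ab by simp
      then have "PP 1 < PP (1 / z + 1)" by (intro PP_strict_mono) auto
      moreover have "ln \<kappa> \<le> 0" using k k1 by simp
      ultimately have "- (PP (1 / z + 1) - ln \<kappa>) \<le> 0" using PP_1 by linarith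
      then have "(b - a) * (- (PP (1 / z + 1) - ln \<kappa>)) \<le> 0"
        using \<open>a < b\<close> by (simp add: mult_nonneg_nonpos)
      then show ?thesis using z by linarith
    qed
    have gmono: "weib_g \<kappa> b \<le> weib_g \<kappa> a" if ab: "0 < a" "a \<le> b" for a b :: real
    proof -
      have "1 - exp (- exp (FF \<kappa> b)) \<le> 1 - exp (- exp (FF \<kappa> a))"
        by (rule g_mono_FF[OF anti[OF ab]])
      then show ?thesis using g_eq[OF k] ab by simp
    qed
    have lim: "(weib_g \<kappa> \<longlongrightarrow> L) at_top"
    proof -
      have ev: "eventually (\<lambda>a. 1 - exp (- exp (FF \<kappa> a)) = weib_g \<kappa> a) at_top"
        using eventually_gt_at_top[of 0] by eventually_elim (simp add: g_eq k)
      have "((\<lambda>a. 1 - exp (- exp (FF \<kappa> a))) \<longlongrightarrow> L) at_top"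
      proof (cases "\<kappa> < 1")
        case True
        have "((\<lambda>a. exp (FF \<kappa> a)) \<longlongrightarrow> 0) at_top"
          using filterlim_compose[OF exp_at_bot FF_lim_bot[OF k True]] by simp
        then have "((\<lambda>a. 1 - exp (- exp (FF \<kappa> a))) \<longlongrightarrow> 1 - exp (- 0)) at_top"
          by (intro tendsto_intros)
        then show ?thesis using True by (simp add: L_def)
      next
        case False
        then have k1': "\<kappa> = 1" using k1 by simp
        have "((\<lambda>a. 1 - exp (- exp (FF 1 a))) \<longlongrightarrow> 1 - exp (- exp (- euler_mascheroni))) at_top"
          by (intro tendsto_intros FF_lim)
        then show ?thesis using False k1' by (simp add: L_def)
      qed
      then show ?thesis using ev by (rule Lim_transform_eventually)
    qed
    have lower: "L \<le> weib_g \<kappa> a" if a: "a > 0" for a :: real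
    proof (rule tendsto_le[OF trivial_limit_at_top_linorder tendsto_const lim])
      show "eventually (\<lambda>b. weib_g \<kappa> b \<le> weib_g \<kappa> a) at_top"
        using eventually_ge_at_top[of a] by eventually_elim (use a gmono in auto)
    qed
    have inf: "(INF a\<in>{0<..}. weib_g \<kappa> a) = L"
    proof (rule antisym)
      show "L \<le> (INF a\<in>{0<..}. weib_g \<kappa> a)"
        by (rule cINF_greatest) (auto intro: lower)
      have bdd: "bdd_below (weib_g \<kappa> ` {0<..})"
        by (rule bdd_belowI2[of _ L]) (auto intro: lower)
      show "(INF a\<in>{0<..}. weib_g \<kappa> a) \<le> L"
      proof (rule tendsto_le[OF trivial_limit_at_top_linorder lim tendsto_const])
        show "eventually (\<lambda>b. (INF a\<in>{0<..}. weib_g \<kappa> a) \<le> weib_g \<kappa> b) at_top"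
          using eventually_gt_at_top[of 0] by eventually_elim (use bdd in \<open>auto intro: cINF_lower\<close>)
      qed
    qed
    show "let L = (if \<kappa> < 1 then 0 else 1 - exp (- exp (- euler_mascheroni))) in
             (INF \<alpha>\<in>{0<..}. weib_g \<kappa> \<alpha>) = L \<and> (weib_g \<kappa> \<longlongrightarrow> L) at_top"
      using inf lim unfolding L_def Let_def by simp
  qed
  have part2: "\<kappa> > 1 \<longrightarrow>
           (\<exists>!x. x > 1 \<and> weib_phi \<kappa> x = 0) \<and>
           (\<forall>x0. x0 > 1 \<and> weib_phi \<kappa> x0 = 0 \<longrightarrow>
              (let \<alpha>0 = 1 / (x0 - 1) in
                 (\<forall>\<alpha>>0. weib_g \<kappa> \<alpha>0 \<le> weib_g \<kappa> \<alpha>) \<and>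
                 weib_g \<kappa> \<alpha>0 = (INF \<alpha>\<in>{0<..}. weib_g \<kappa> \<alpha>)))"
  proof
    assume k1: "\<kappa> > 1"
    have lk: "ln \<kappa> > 0" using k1 by simp
    have zero_iff: "weib_phi \<kappa> x = 0 \<longleftrightarrow> PP x = ln \<kappa>" if "x > 1" for x
      using phi_eq[OF k, of x] that by simp
    have uniq: "x = y" if "x > 1" "y > 1" "PP x = ln \<kappa>" "PP y = ln \<kappa>" for x y
    proof (rule ccontr)
      assume "x \<noteq> y"
      then have "x < y \<or> y < x" by linarith
      then show False using PP_strict_mono[of x y] PP_strict_mono[of y x] that by auto
    qed
    obtain b where b: "b > 1" "PP b > ln \<kappa>" using PP_unbounded by blast
    have "\<exists>x. 1 \<le> x \<and> x \<le> b \<and> PP x = ln \<kappa>"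
      by (rule IVT) (use PP_1 lk b in \<open>auto intro: DERIV_isCont[OF PP_deriv]\<close>)
    then obtain x where x: "1 \<le> x" "PP x = ln \<kappa>" by blast
    have "x \<noteq> 1" using x PP_1 lk by auto
    with x have x1: "x > 1" by simp
    have ex1: "\<exists>!x. x > 1 \<and> weib_phi \<kappa> x = 0"
    proof (rule ex1I[of _ x])
      show "x > 1 \<and> weib_phi \<kappa> x = 0" using x1 x zero_iff by simp
      fix y assume "y > 1 \<and> weib_phi \<kappa> y = 0"
      then show "y = x" using uniq[of y x] zero_iff x x1 by auto
    qed
    have minpart: "let \<alpha>0 = 1 / (x0 - 1) in
                 (\<forall>\<alpha>>0. weib_g \<kappa> \<alpha>0 \<le> weib_g \<kappa> \<alpha>) \<and>
                 weib_g \<kappa> \<alpha>0 = (INF \<alpha>\<in>{0<..}. weib_g \<kappa> \<alpha>)"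
      if hx0: "x0 > 1 \<and> weib_phi \<kappa> x0 = 0" for x0
    proof -
      have x0: "x0 > 1" "PP x0 = ln \<kappa>" using hx0 zero_iff by auto
      define a0 where "a0 = 1 / (x0 - 1)"
      have a0: "a0 > 0" using x0 by (simp add: a0_def)
      have inv0: "1 / a0 + 1 = x0" using x0 by (simp add: a0_def)
      have FFmin: "FF \<kappa> a0 \<le> FF \<kappa> a" if a: "a > 0" for a
      proof (cases a a0 rule: linorder_cases)
        case less
        from FF_mvt[OF a less, of \<kappa>] obtain z where
          z: "a < z" "z < a0" "FF \<kappa> a0 - FF \<kappa> a = (a0 - a) * (- (PP (1 / z + 1) - ln \<kappa>))"
          by blast
        have "1 / a0 < 1 / z" using z a by (intro divide_strict_left_mono) auto
        then have "x0 < 1 / z + 1" using inv0 by linarith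
        then have "PP x0 < PP (1 / z + 1)" using x0 by (intro PP_strict_mono) auto
        then have "(a0 - a) * (- (PP (1 / z + 1) - ln \<kappa>)) \<le> 0"
          using less x0 by (intro mult_nonneg_nonpos) auto
        then show ?thesis using z by linarith
      next
        case equal then show ?thesis by simp
      next
        case greater
        from FF_mvt[OF a0 greater, of \<kappa>] obtain z where
          z: "a0 < z" "z < a" "FF \<kappa> a - FF \<kappa> a0 = (a - a0) * (- (PP (1 / z + 1) - ln \<kappa>))"
          by blast
        have "1 / z < 1 / a0" using z a0 by (intro divide_strict_left_mono) auto
        then have "1 / z + 1 < x0" using inv0 by linarith
        moreover have "1 \<le> 1 / z + 1" using z a0 by simp
        ultimately have "PP (1 / z + 1) < PP x0" by (intro PP_strict_mono) auto
        then have "(a - a0) * (- (PP (1 / z + 1) - ln \<kappa>)) \<ge> 0"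
          using greater x0 by (intro mult_nonneg_nonneg) auto
        then show ?thesis using z by linarith
      qed
      have gmin: "weib_g \<kappa> a0 \<le> weib_g \<kappa> a" if a: "a > 0" for a
      proof -
        have "1 - exp (- exp (FF \<kappa> a0)) \<le> 1 - exp (- exp (FF \<kappa> a))"
          by (rule g_mono_FF[OF FFmin[OF a]])
        then show ?thesis using g_eq[OF k a] g_eq[OF k a0] by simp
      qed
      have "(INF \<alpha>\<in>{0<..}. weib_g \<kappa> \<alpha>) = weib_g \<kappa> a0"
        by (rule cInf_eq_minimum) (use a0 gmin in auto)
      then show ?thesis using gmin unfolding a0_def[symmetric] Let_def by auto
    qed
    show "(\<exists>!x. x > 1 \<and> weib_phi \<kappa> x = 0) \<and>
           (\<forall>x0. x0 > 1 \<and> weib_phi \<kappa> x0 = 0 \<longrightarrow>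
              (let \<alpha>0 = 1 / (x0 - 1) in
                 (\<forall>\<alpha>>0. weib_g \<kappa> \<alpha>0 \<le> weib_g \<kappa> \<alpha>) \<and>
                 weib_g \<kappa> \<alpha>0 = (INF \<alpha>\<in>{0<..}. weib_g \<kappa> \<alpha>)))"
      using ex1 minpart by blast
  qed
  show ?thesis using part1 part2 by blast
qed

end
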